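(* There exist universal constants $c_B,c_1,c_2>0$ such that the following holds. Let $(Z,Y)$ be random with $Z\in[0,1]$, $Y\in\{0,1\}$, let $g:[0,1]\to[0,1]$, and let $\mathcal{B}=\{I_1,\dots,I_B\}$ be a fixed 2-well-balanced binning scheme (with respect to $g(Z)$). Let $T_3=\{(z_i,y_i)\}_{i=1}^n$ be i.i.d. draws from the distribution of $(Z,Y)$, and let $0<\delta<0.5$. If $n\ge c_B B\log\frac{B}{\delta}$, then with probability at least $1-\delta$, $\|\hat g_{\mathcal{B}}-g_{\mathcal{B}}\|_2\le \frac{c_2}{\sqrt n}\sqrt{\log\frac{B}{\delta}}$ and $\|\hat g_{\mathcal{B}}-g_{\mathcal{B}}\|_1\le \frac{c_1}{\sqrt{nB}}\sqrt{\log\frac{B}{\delta}}$.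
   Context: A binning scheme of size $B$ is a set of intervals $I_1,\dots,I_B$ partitioning $[0,1]$; $\beta(z)$ is the index $j$ with $z\in I_j$. It is 2-well-balanced (w.r.t. $g(Z)$) if $\frac{1}{2B}\le \Pr(g(Z)\in I_j)\le \frac{2}{B}$ for all $j$. The population binned function is $g_{\mathcal{B}}(z)=\mathbb{E}[g(Z)\mid g(Z)\in I_{\beta(g(z))}]$. The empirically binned function $\hat g_{\mathcal{B}}(z)$ is the average of the values $g(z_i)$, $(z_i,y_i)\in T_3$, with $g(z_i)\in I_{\beta(g(z))}$. For $h_1,h_2:[0,1]\to[0,1]$, $\|h_1-h_2\|_2^2=\mathbb{E}[(h_1(Z)-h_2(Z))^2]$ and $\|h_1-h_2\|_1=\mathbb{E}[|h_1(Z)-h_2(Z)|]$. *)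

theory Defs
  imports "HOL-Probability.Probability"
begin

definition binning_scheme :: "nat \<Rightarrow> (nat \<Rightarrow> real set) \<Rightarrow> bool" where
  "binning_scheme B I \<longleftrightarrow> B \<ge> 1 \<and> (\<forall>j<B. is_interval (I j)) \<and>
     (\<Union>j<B. I j) = {0..1} \<and> (\<forall>j<B. \<forall>k<B. j \<noteq> k \<longrightarrow> I j \<inter> I k = {})"

definition bin_index :: "nat \<Rightarrow> (nat \<Rightarrow> real set) \<Rightarrow> real \<Rightarrow> nat" where
  "bin_index B I z = (THE j. j < B \<and> z \<in> I j)"

definition bin_event :: "(real \<times> bool) measure \<Rightarrow> (real \<Rightarrow> real) \<Rightarrow> real set \<Rightarrow> (real \<times> bool) set" where
  "bin_event M g A = {x \<in> space M. g (fst x) \<in> A}"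

definition well_balanced2 :: "(real \<times> bool) measure \<Rightarrow> (real \<Rightarrow> real) \<Rightarrow> nat \<Rightarrow> (nat \<Rightarrow> real set) \<Rightarrow> bool" where
  "well_balanced2 M g B I \<longleftrightarrow> (\<forall>j<B. 1 / (2 * real B) \<le> measure M (bin_event M g (I j))
                                    \<and> measure M (bin_event M g (I j)) \<le> 2 / real B)"

definition pop_binned :: "(real \<times> bool) measure \<Rightarrow> (real \<Rightarrow> real) \<Rightarrow> nat \<Rightarrow> (nat \<Rightarrow> real set) \<Rightarrow> real \<Rightarrow> real" where
  "pop_binned M g B I z =
     (let A = bin_event M g (I (bin_index B I (g z)))
      in (\<integral>x. indicator A x * g (fst x) \<partial>M) / measure M A)"

definition emp_binned :: "(real \<Rightarrow> real) \<Rightarrow> nat \<Rightarrow> (nat \<Rightarrow> real set) \<Rightarrow> nat \<Rightarrow> (nat \<Rightarrow> real \<times> bool) \<Rightarrow> real \<Rightarrow> real" where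
  "emp_binned g B I n T z =
     (let K = {i \<in> {..<n}. g (fst (T i)) \<in> I (bin_index B I (g z))}
      in if K = {} then 0 else (\<Sum>i\<in>K. g (fst (T i))) / real (card K))"

definition L2_dist :: "(real \<times> bool) measure \<Rightarrow> (real \<Rightarrow> real) \<Rightarrow> (real \<Rightarrow> real) \<Rightarrow> real" where
  "L2_dist M h1 h2 = sqrt (\<integral>x. (h1 (fst x) - h2 (fst x))\<^sup>2 \<partial>M)"

definition L1_dist :: "(real \<times> bool) measure \<Rightarrow> (real \<Rightarrow> real) \<Rightarrow> (real \<Rightarrow> real) \<Rightarrow> real" where
  "L1_dist M h1 h2 = (\<integral>x. \<bar>h1 (fst x) - h2 (fst x)\<bar> \<partial>M)"

end

theory Submission
  imports Defs
begin


lemma exp_quad_bound: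
  fixes y :: real assumes "\<bar>y\<bar> \<le> 1" shows "exp y \<le> 1 + y + y\<^sup>2"
proof (cases "y \<ge> 0")
  case True thus ?thesis using exp_bound[of y] assms by auto
next
  case False
  define x where "x = - y"
  have x: "0 \<le> x" "x \<le> 1" using False assms by (auto simp: x_def)
  have "1 + x + x\<^sup>2/2 \<le> exp x" using exp_lower_Taylor_quadratic[of x] x by simp
  moreover have pos: "0 < 1 + x + x\<^sup>2/2" using x by (simp add: add_pos_nonneg)
  moreover have "1 \<le> (1 - x + x\<^sup>2) * (1 + x + x\<^sup>2/2)"
  proof -
    have "(1 - x + x\<^sup>2) * (1 + x + x\<^sup>2/2) = 1 + x\<^sup>2/2 + x^3/2 + x^4/2"
      by (simp add: power2_eq_square power3_eq_cube power4_eq_xxxx algebra_simps add_divide_distrib diff_divide_distrib)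
    thus ?thesis using x by simp
  qed
  moreover have "0 \<le> 1 - x + x\<^sup>2" using x by (simp add: power2_eq_square)
  ultimately have "1 \<le> (1 - x + x\<^sup>2) * exp x"
    by (meson mult_left_mono order_trans)
  hence "1 / exp x \<le> 1 - x + x\<^sup>2" by (simp add: divide_le_eq)
  thus ?thesis by (simp add: x_def exp_minus field_simps)
qed

lemma mgf_bound:
  fixes M :: "'a measure" and f :: "'a \<Rightarrow> real"
  assumes M: "prob_space M" and f[measurable]: "f \<in> borel_measurable M"
    and bnd: "\<And>x. x \<in> space M \<Longrightarrow> \<bar>f x\<bar> \<le> w" and l: "0 \<le> l" "l * w \<le> 1"
    and mean: "(\<integral>x. f x \<partial>M) = 0" and var: "(\<integral>x. (f x)\<^sup>2 \<partial>M) \<le> v"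
  shows "(\<integral>x. exp (l * f x) \<partial>M) \<le> exp (l\<^sup>2 * v)"
    "integrable M (\<lambda>x. exp (l * f x))"
proof -
  interpret prob_space M by fact
  have lf: "\<bar>l * f x\<bar> \<le> 1" if "x \<in> space M" for x
  proof -
    have "\<bar>l * f x\<bar> = l * \<bar>f x\<bar>" using l by (simp add: abs_mult)
    also have "\<dots> \<le> l * w" using bnd[OF that] l by (simp add: mult_left_mono)
    finally show ?thesis using l by simp
  qed
  have i1: "integrable M f"
    by (rule integrable_const_bound[where B=w]) (use bnd in \<open>auto intro!: AE_I2 intro: order_trans[OF _ abs_ge_self]\<close>)
  have i2: "integrable M (\<lambda>x. (f x)\<^sup>2)"
  proof (rule integrable_const_bound[where B="w\<^sup>2"])
    show "AE x in M. norm ((f x)\<^sup>2) \<le> w\<^sup>2"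
      using bnd by (auto intro!: AE_I2 simp: abs_le_square_iff[symmetric] intro: order_trans[OF _ abs_ge_self])
  qed simp
  show i3: "integrable M (\<lambda>x. exp (l * f x))"
  proof (rule integrable_const_bound[where B="exp 1"])
    show "AE x in M. norm (exp (l * f x)) \<le> exp 1"
      using lf by (auto intro!: AE_I2 simp: abs_le_iff)
  qed simp
  have "(\<integral>x. exp (l * f x) \<partial>M) \<le> (\<integral>x. 1 + l * f x + l\<^sup>2 * (f x)\<^sup>2 \<partial>M)"
  proof (rule integral_mono)
    show "integrable M (\<lambda>x. 1 + l * f x + l\<^sup>2 * (f x)\<^sup>2)" using i1 i2 by simp
    show "exp (l * f x) \<le> 1 + l * f x + l\<^sup>2 * (f x)\<^sup>2" if "x \<in> space M" for x
      using exp_quad_bound[OF lf[OF that]] by (simp add: power_mult_distrib)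
  qed (rule i3)
  also have "\<dots> = 1 + l * (\<integral>x. f x \<partial>M) + l\<^sup>2 * (\<integral>x. (f x)\<^sup>2 \<partial>M)"
    using i1 i2 by (simp add: prob_space)
  also have "\<dots> \<le> 1 + l\<^sup>2 * v" using mean var by (simp add: mult_left_mono)
  also have "\<dots> \<le> exp (l\<^sup>2 * v)" by (rule exp_ge_add_one_self[simplified add.commute])
  finally show "(\<integral>x. exp (l * f x) \<partial>M) \<le> exp (l\<^sup>2 * v)" .
qed

lemma chernoff_prod:
  fixes M :: "'a measure" and f :: "'a \<Rightarrow> real"
  assumes M: "prob_space M" and f[measurable]: "f \<in> borel_measurable M"
    and bnd: "\<And>x. x \<in> space M \<Longrightarrow> \<bar>f x\<bar> \<le> w" and l: "0 \<le> l" "l * w \<le> 1"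
    and mean: "(\<integral>x. f x \<partial>M) = 0" and var: "(\<integral>x. (f x)\<^sup>2 \<partial>M) \<le> v"
  shows "measure (PiM {..<n} (\<lambda>_. M)) {T \<in> space (PiM {..<n} (\<lambda>_. M)). t \<le> (\<Sum>i<n. f (T i))}
           \<le> exp (- l * t + real n * l\<^sup>2 * v)"
proof -
  define P where "P = PiM {..<n} (\<lambda>_. M)"
  interpret M: prob_space M by fact
  interpret PP: product_prob_space "\<lambda>_::nat. M" "{..<n}"
    by unfold_locales
  interpret P: prob_space P unfolding P_def by (rule prob_space_PiM) (rule M)
  show ?thesis
  proof (cases "l = 0")
    case True
    thus ?thesis using P.prob_le_1 by (simp add: P_def)
  next
    case False
    hence lpos: "l > 0" using l by simp
    have "ennreal (measure P {T \<in> space P. t \<le> (\<Sum>i<n. f (T i))}) = emeasure P {T \<in> space P. t \<le> (\<Sum>i<n. f (T i))}"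
      by (simp add: P.emeasure_eq_measure)
    also have "\<dots> \<le> ennreal (exp (- l * t)) * (\<integral>\<^sup>+T. ennreal (exp (l * (\<Sum>i<n. f (T i)))) * indicator (space P) T \<partial>P)"
      by (rule Chernoff_ineq_nn_integral_ge[OF lpos]) (auto simp: P_def)
    also have "(\<integral>\<^sup>+T. ennreal (exp (l * (\<Sum>i<n. f (T i)))) * indicator (space P) T \<partial>P)
        = (\<integral>\<^sup>+T. (\<Prod>i\<in>{..<n}. (\<lambda>x. ennreal (exp (l * f x))) (T i)) \<partial>P)"
      by (intro nn_integral_cong)
         (simp add: sum_distrib_left exp_sum prod_ennreal)
    also have "\<dots> = (\<Prod>i\<in>{..<n}. \<integral>\<^sup>+x. ennreal (exp (l * f x)) \<partial>M)"
      unfolding P_def by (rule PP.product_nn_integral_prod) auto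
    also have "\<dots> = (\<Prod>i\<in>{..<n}. ennreal (\<integral>x. exp (l * f x) \<partial>M))"
      using mgf_bound[OF M f bnd l mean var] by (simp add: nn_integral_eq_integral)
    also have "ennreal (exp (- l * t)) * \<dots> \<le> ennreal (exp (- l * t)) * (\<Prod>i\<in>{..<n}. ennreal (exp (l\<^sup>2 * v)))"
      using mgf_bound[OF M f bnd l mean var] by (intro mult_left_mono prod_mono_ennreal) (simp_all add: ennreal_leI)
    also have "\<dots> = ennreal (exp (- l * t + real n * l\<^sup>2 * v))"
    proof -
      have "exp (l\<^sup>2 * v) ^ n = exp (real n * l\<^sup>2 * v)"
        by (simp add: exp_of_nat_mult[symmetric] mult_ac)
      thus ?thesis
        by (simp add: ennreal_power ennreal_mult[symmetric] exp_add[symmetric])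
    qed
    finally show ?thesis
      by (subst (asm) ennreal_le_iff) (simp_all add: P_def)
  qed
qed

lemma bs_basic:
  assumes "binning_scheme B I"
  shows "B \<ge> 1" "\<And>j. j < B \<Longrightarrow> I j \<subseteq> {0..1}" "\<And>j. j < B \<Longrightarrow> I j \<in> sets borel"
    "\<And>j. j < B \<Longrightarrow> is_interval (I j)"
    "\<And>j k y. j < B \<Longrightarrow> k < B \<Longrightarrow> y \<in> I j \<Longrightarrow> y \<in> I k \<Longrightarrow> j = k"
    "\<And>y. y \<in> {0..1} \<Longrightarrow> \<exists>j<B. y \<in> I j"
  using assms unfolding binning_scheme_def
  by (auto intro: real_interval_borel_measurable) blast+

lemma bin_index_prop:
  assumes "binning_scheme B I" "y \<in> {0..1}"
  shows "bin_index B I y < B \<and> y \<in> I (bin_index B I y)"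
proof -
  obtain j where j: "j < B" "y \<in> I j" using bs_basic(6)[OF assms] by blast
  have "\<exists>!j. j < B \<and> y \<in> I j" using j bs_basic(5)[OF assms(1)] by blast
  thus ?thesis unfolding bin_index_def by (rule theI')
qed

lemma bin_index_eq:
  assumes "binning_scheme B I" "j < B" "y \<in> I j"
  shows "bin_index B I y = j"
proof -
  have y: "y \<in> {0..1}" using bs_basic(2)[OF assms(1,2)] assms(3) by blast
  show ?thesis using bin_index_prop[OF assms(1) y] bs_basic(5)[OF assms(1)] assms(2,3) by blast
qed

lemma bin_fun:
  fixes F :: "nat \<Rightarrow> real"
  assumes "binning_scheme B I"
  shows "F (bin_index B I y) = (if y \<in> {0..1} then (\<Sum>j<B. indicator (I j) y * F j) else F (The (\<lambda>_. False)))"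
proof (cases "y \<in> {0..1}")
  case True
  define j0 where "j0 = bin_index B I y"
  have j0: "j0 < B" "y \<in> I j0" using bin_index_prop[OF assms True] by (auto simp: j0_def)
  have "(\<Sum>j<B. indicator (I j) y * F j) = (\<Sum>j<B. if j = j0 then F j else 0)"
    by (rule sum.cong) (use j0 bs_basic(5)[OF assms] in \<open>auto simp: indicator_def\<close>)
  also have "\<dots> = F j0" using j0 by simp
  finally show ?thesis using True by (simp add: j0_def)
next
  case False
  have "(\<lambda>j. j < B \<and> y \<in> I j) = (\<lambda>_. False)"
    using False bs_basic(2)[OF assms] by (intro ext) (meson subsetD)
  hence bi: "bin_index B I y = The (\<lambda>_. False)" unfolding bin_index_def by simp
  show ?thesis by (subst if_not_P[OF False]) (simp add: bi)
qed

lemma interval_width: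
  assumes "is_interval S" "S \<subseteq> {0..1::real}" "x \<in> S" "y \<in> S"
  shows "\<bar>x - y\<bar> \<le> measure lborel S"
proof -
  have Sb: "S \<in> sets borel" using assms(1) by (rule real_interval_borel_measurable)
  have Sf: "S \<in> fmeasurable lborel"
    by (rule fmeasurableI2[where A="{0..1}"]) (use assms(2) Sb in \<open>auto intro!: fmeasurableI\<close>)
  have iv: "\<And>a b z. a \<in> S \<Longrightarrow> b \<in> S \<Longrightarrow> a \<le> z \<Longrightarrow> z \<le> b \<Longrightarrow> z \<in> S"
    using assms(1) unfolding is_interval_1 by blast
  have sub: "{min x y..max x y} \<subseteq> S"
  proof
    fix z assume z: "z \<in> {min x y..max x y}"
    show "z \<in> S"
    proof (cases "x \<le> y")
      case True thus ?thesis using z iv[of x y z] assms(3,4) by (simp add: min_def max_def)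
    next
      case False thus ?thesis using z iv[of y x z] assms(3,4) by (simp add: min_def max_def)
    qed
  qed
  have "\<bar>x - y\<bar> = measure lborel {min x y..max x y}" by (cases "x \<le> y") (simp_all add: min_def max_def)
  also have "\<dots> \<le> measure lborel S" by (rule measure_mono_fmeasurable[OF sub _ Sf]) simp
  finally show ?thesis .
qed

lemma width_sum:
  assumes "binning_scheme B I"
  shows "(\<Sum>j<B. measure lborel (I j)) \<le> 1"
proof -
  have "measure lborel (\<Union>j\<in>{..<B}. I j) = (\<Sum>j<B. measure lborel (I j))"
  proof (rule measure_finite_Union)
    show "I ` {..<B} \<subseteq> sets lborel" using bs_basic(3)[OF assms] by auto
    show "disjoint_family_on I {..<B}" using assms unfolding binning_scheme_def disjoint_family_on_def by auto
    fix j assume j: "j \<in> {..<B}"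
    have "emeasure lborel (I j) \<le> emeasure lborel {0..1::real}"
      using bs_basic(2,3)[OF assms] j by (intro emeasure_mono) auto
    thus "emeasure lborel (I j) \<noteq> \<infinity>" by (auto simp: top_unique)
  qed simp
  moreover have "(\<Union>j\<in>{..<B}. I j) = {0..1}" using assms unfolding binning_scheme_def by auto
  ultimately show ?thesis by simp
qed



lemma main_fixed:
  fixes M :: "(real \<times> bool) measure" and g :: "real \<Rightarrow> real" and B n :: nat
    and I :: "nat \<Rightarrow> real set" and \<delta> :: real
  assumes Mp: "prob_space M" and sM: "sets M = sets (borel \<Otimes>\<^sub>M count_space UNIV)"
    and ae: "AE x in M. fst x \<in> {0..1}" and gm: "g \<in> borel_measurable borel"
    and g01: "\<forall>z\<in>{0..1}. g z \<in> {0..1}" and bs: "binning_scheme B I" and wb: "well_balanced2 M g B I"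
    and d0: "0 < \<delta>" and d1: "\<delta> < 1/2" and nB: "real n \<ge> 96 * real B * ln (real B / \<delta>)"
  shows "measure (PiM {..<n} (\<lambda>_. M))
         {T \<in> space (PiM {..<n} (\<lambda>_. M)).
            L2_dist M (emp_binned g B I n T) (pop_binned M g B I)
              \<le> 14 / sqrt (real n) * sqrt (ln (real B / \<delta>)) \<and>
            L1_dist M (emp_binned g B I n T) (pop_binned M g B I)
              \<le> 20 / sqrt (real n * real B) * sqrt (ln (real B / \<delta>))}
       \<ge> 1 - \<delta>"
proof -
  interpret M: prob_space M by fact
  define P where "P = PiM {..<n} (\<lambda>_. M)"
  interpret P: prob_space P unfolding P_def by (rule prob_space_PiM) (rule Mp)
  have sp1: "measure M (space M) = 1" using M.emeasure_space_1 by (simp add: M.emeasure_eq_measure)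
  have B1: "B \<ge> 1" using bs_basic(1)[OF bs] .
  define lnB where "lnB = ln (real B / \<delta>)"
  define L where "L = ln (3 * real B / \<delta>)"
  have Bd2: "2 \<le> real B / \<delta>"
  proof -
    have "2 * \<delta> \<le> 1" using d1 by simp
    also have "1 \<le> real B" using B1 by simp
    finally show ?thesis using d0 by (simp add: field_simps)
  qed
  have lnB2: "ln 2 \<le> lnB" unfolding lnB_def using Bd2 by simp
  have ln2pos: "0 < ln (2::real)" by simp
  have L_eq: "L = ln 3 + lnB"
  proof -
    have "ln (3 * (real B / \<delta>)) = ln 3 + ln (real B / \<delta>)" using Bd2 by (intro ln_mult_pos) auto
    thus ?thesis by (simp add: L_def lnB_def)
  qed
  have ln3: "ln 3 \<le> 2 * ln (2::real)"
  proof -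
    have "ln (3::real) \<le> ln 4" by simp
    also have "ln (4::real) = 2 * ln 2" using ln_realpow[of 2 2] by simp
    finally show ?thesis .
  qed
  have L_le: "L \<le> 3 * lnB" using L_eq ln3 lnB2 by linarith
  have Lpos: "L > 0" using L_eq lnB2 ln2pos ln3 by (smt (verit) ln_less_zero_iff)
  have nL: "real n \<ge> 32 * real B * L"
  proof -
    have "32 * real B * L \<le> 32 * real B * (3 * lnB)" using L_le B1 by (intro mult_left_mono) auto
    moreover have "32 * real B * (3 * lnB) = 96 * real B * lnB" by simp
    ultimately show ?thesis using nB unfolding lnB_def by linarith
  qed
  have npos: "real n > 0"
    using nL Lpos B1 by (smt (verit, best) mult_pos_pos of_nat_0_less_iff One_nat_def less_le_trans zero_less_one)
  have expL: "exp (- L) = \<delta> / (3 * real B)"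
    unfolding L_def using d0 B1 by (simp add: exp_minus ln_div exp_diff)

  define J where "J j = (if j < B then I j else {})" for j
  have J_borel[measurable]: "J j \<in> sets borel" for j
    using bs_basic(3)[OF bs] by (simp add: J_def)
  have hm[measurable]: "(\<lambda>x. g (fst x)) \<in> borel_measurable M"
  proof -
    have "(\<lambda>x. g (fst x)) \<in> borel_measurable (borel \<Otimes>\<^sub>M count_space UNIV)" using gm by measurable
    thus ?thesis by (subst measurable_cong_sets[OF sM refl])
  qed
  define ind where "ind j (x::real \<times> bool) = (indicator (J j) (g (fst x)) :: real)" for j x
  have ind_meas[measurable]: "(\<lambda>x. ind j x) \<in> borel_measurable M" for j
    unfolding ind_def by measurable
  have ind01: "ind j x = 0 \<or> ind j x = 1" for j x by (simp add: ind_def indicator_def)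
  have ind_I: "j < B \<Longrightarrow> ind j x = (if g (fst x) \<in> I j then 1 else 0)" for j x
    by (simp add: ind_def J_def indicator_def)
  define A where "A j = bin_event M g (I j)" for j
  have A_ind: "j < B \<Longrightarrow> x \<in> space M \<Longrightarrow> indicator (A j) x = ind j x" for j x
    by (auto simp: A_def bin_event_def ind_def J_def indicator_def)
  have A_sets: "j < B \<Longrightarrow> A j \<in> sets M" for j
  proof -
    assume j: "j < B"
    have "A j = {x \<in> space M. ind j x = 1}"
      using ind_I[OF j] by (auto simp: A_def bin_event_def)
    also have "\<dots> \<in> sets M" by measurable
    finally show ?thesis .
  qed
  define p where "p j = measure M (A j)" for j
  have p_lo: "j < B \<Longrightarrow> 1 / (2 * real B) \<le> p j" for j
    using wb by (simp add: well_balanced2_def p_def A_def)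
  have p_hi: "j < B \<Longrightarrow> p j \<le> 2 / real B" for j
    using wb by (simp add: well_balanced2_def p_def A_def)
  have p_pos: "j < B \<Longrightarrow> 0 < p j" for j
    using p_lo[of j] B1 by (smt (verit) divide_pos_pos of_nat_0_less_iff less_le_trans zero_less_one le_eq_less_or_eq One_nat_def)
  have p_le1: "p j \<le> 1" for j by (simp add: p_def)
  have int_ind: "j < B \<Longrightarrow> (\<integral>x. ind j x \<partial>M) = p j" for j
  proof -
    assume j: "j < B"
    have "(\<integral>x. ind j x \<partial>M) = (\<integral>x. indicator (A j) x \<partial>M)"
      by (rule Bochner_Integration.integral_cong) (auto simp: A_ind[OF j])
    also have "\<dots> = p j" using A_sets[OF j] by (simp add: p_def)
    finally show ?thesis .
  qed
  have intg_ind: "integrable M (\<lambda>x. ind j x)" for j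
    by (rule M.integrable_const_bound[where B=1]) (auto simp: ind_def)
  have gi_bnd: "\<bar>ind j x * g (fst x)\<bar> \<le> 1" for j x
  proof (cases "j < B \<and> g (fst x) \<in> I j")
    case True
    hence "g (fst x) \<in> {0..1}" using bs_basic(2)[OF bs] by blast
    thus ?thesis using True by (simp add: ind_I)
  next
    case False thus ?thesis by (auto simp: ind_def J_def)
  qed
  have intg_gi: "integrable M (\<lambda>x. ind j x * g (fst x))" for j
    by (rule M.integrable_const_bound[where B=1]) (use gi_bnd in auto)
  define m where "m j = (\<integral>x. indicator (A j) x * g (fst x) \<partial>M) / p j" for j
  have int_gi: "j < B \<Longrightarrow> (\<integral>x. ind j x * g (fst x) \<partial>M) = p j * m j" for j
  proof -
    assume j: "j < B"
    have "(\<integral>x. ind j x * g (fst x) \<partial>M) = (\<integral>x. indicator (A j) x * g (fst x) \<partial>M)"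
      by (rule Bochner_Integration.integral_cong) (auto simp: A_ind[OF j])
    thus ?thesis using p_pos[OF j] by (simp add: m_def)
  qed
  define w where "w j = measure lborel (I j)" for j
  have w_nn: "0 \<le> w j" for j by (simp add: w_def)
  have w_sum: "(\<Sum>j<B. w j) \<le> 1" using width_sum[OF bs] by (simp add: w_def)
  have w_le1: "j < B \<Longrightarrow> w j \<le> 1" for j
    using w_sum member_le_sum[of j "{..<B}" w] w_nn by force
  have w_int: "j < B \<Longrightarrow> x \<in> I j \<Longrightarrow> y \<in> I j \<Longrightarrow> \<bar>x - y\<bar> \<le> w j" for j x y
    unfolding w_def using bs_basic(2,4)[OF bs] by (intro interval_width) auto
  have m_close: "j < B \<Longrightarrow> y \<in> I j \<Longrightarrow> \<bar>y - m j\<bar> \<le> w j" for j y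
  proof -
    assume j: "j < B" and y: "y \<in> I j"
    have "(\<integral>x. ind j x * (g (fst x) - y) \<partial>M) = (\<integral>x. ind j x * g (fst x) - y * ind j x \<partial>M)"
      by (simp add: algebra_simps)
    also have "\<dots> = p j * m j - y * p j"
      using intg_gi intg_ind int_gi[OF j] int_ind[OF j] by simp
    finally have eq: "(\<integral>x. ind j x * (g (fst x) - y) \<partial>M) = p j * (m j - y)" by (simp add: algebra_simps)
    have "\<bar>\<integral>x. ind j x * (g (fst x) - y) \<partial>M\<bar> \<le> (\<integral>x. \<bar>ind j x * (g (fst x) - y)\<bar> \<partial>M)"
      by (rule integral_abs_bound)
    also have "\<dots> \<le> (\<integral>x. ind j x * w j \<partial>M)"
    proof (rule integral_mono)
      show "integrable M (\<lambda>x. \<bar>ind j x * (g (fst x) - y)\<bar>)"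
        using intg_gi intg_ind by (simp add: algebra_simps)
      show "integrable M (\<lambda>x. ind j x * w j)" using intg_ind by simp
      fix x
      show "\<bar>ind j x * (g (fst x) - y)\<bar> \<le> ind j x * w j"
        using w_int[OF j _ y, of "g (fst x)"] by (simp add: ind_I[OF j])
    qed
    also have "\<dots> = p j * w j" using int_ind[OF j] by simp
    finally have "p j * \<bar>m j - y\<bar> \<le> p j * w j" using eq p_pos[OF j] by (simp add: abs_mult)
    thus ?thesis using p_pos[OF j] by (simp add: abs_minus_commute)
  qed
  define w' where "w' j = w j + 1 / real B" for j
  have w'_pos: "0 < w' j" for j using w_nn[of j] B1 by (simp add: w'_def add_nonneg_pos)
  have w'_le2: "j < B \<Longrightarrow> w' j \<le> 2" for j
  proof -
    assume j: "j < B"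
    have "1 / real B \<le> 1" using B1 by simp
    thus ?thesis using w_le1[OF j] unfolding w'_def by linarith
  qed
  have w'_sum: "(\<Sum>j<B. w' j) \<le> 2"
    using w_sum B1 by (simp add: w'_def sum.distrib)
  define fc where "fc j x = p j - ind j x" for j x
  define fs where "fs j x = ind j x * (g (fst x) - m j)" for j x
  have fc_meas[measurable]: "fc j \<in> borel_measurable M" for j unfolding fc_def by measurable
  have fs_meas[measurable]: "fs j \<in> borel_measurable M" for j unfolding fs_def by measurable
  have fc_bnd: "\<bar>fc j x\<bar> \<le> 1" for j x
  proof -
    have "0 \<le> p j" by (simp add: p_def)
    thus ?thesis using ind01[of j x] p_le1[of j] unfolding fc_def by (elim disjE) simp_all
  qed
  have fc_mean: "j < B \<Longrightarrow> (\<integral>x. fc j x \<partial>M) = 0" for j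
    using intg_ind int_ind[of j] using sp1 by (simp add: fc_def)
  have fc_var: "j < B \<Longrightarrow> (\<integral>x. (fc j x)\<^sup>2 \<partial>M) \<le> p j" for j
  proof -
    assume j: "j < B"
    have sq: "(fc j x)\<^sup>2 = (p j)\<^sup>2 - (2 * p j - 1) * ind j x" for x
      using ind01[of j x] by (auto simp: fc_def power2_eq_square algebra_simps)
    have "(\<integral>x. (fc j x)\<^sup>2 \<partial>M) = (p j)\<^sup>2 - (2 * p j - 1) * p j"
      unfolding sq using intg_ind int_ind[OF j] sp1 by simp
    also have "\<dots> \<le> p j" by (simp add: power2_eq_square algebra_simps)
    finally show ?thesis .
  qed
  have fs_bnd: "j < B \<Longrightarrow> \<bar>fs j x\<bar> \<le> w' j" for j x
  proof -
    assume j: "j < B"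
    show ?thesis
    proof (cases "g (fst x) \<in> I j")
      case True
      have h: "1 / real B \<ge> 0" by simp
      show ?thesis using m_close[OF j True] True h unfolding fs_def ind_I[OF j] w'_def by (simp, linarith)
    next
      case False thus ?thesis using w'_pos[of j] unfolding fs_def ind_I[OF j] by simp
    qed
  qed
  have fs_mean: "j < B \<Longrightarrow> (\<integral>x. fs j x \<partial>M) = 0" for j
  proof -
    assume j: "j < B"
    have "(\<integral>x. fs j x \<partial>M) = (\<integral>x. ind j x * g (fst x) - m j * ind j x \<partial>M)"
      by (simp add: fs_def algebra_simps)
    also have "\<dots> = p j * m j - m j * p j" using intg_gi intg_ind int_gi[OF j] int_ind[OF j] by simp
    finally show ?thesis by simp
  qed
  have fs_var: "j < B \<Longrightarrow> (\<integral>x. (fs j x)\<^sup>2 \<partial>M) \<le> p j * (w' j)\<^sup>2" for j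
  proof -
    assume j: "j < B"
    have "(\<integral>x. (fs j x)\<^sup>2 \<partial>M) \<le> (\<integral>x. (w' j)\<^sup>2 * ind j x \<partial>M)"
    proof (rule integral_mono)
      show "integrable M (\<lambda>x. (fs j x)\<^sup>2)"
        by (rule M.integrable_const_bound[where B="(w' j)\<^sup>2"])
           (use fs_bnd[OF j] in \<open>auto intro!: AE_I2 simp: abs_le_square_iff[symmetric] intro: order_trans[OF _ abs_ge_self]\<close>)
      show "integrable M (\<lambda>x. (w' j)\<^sup>2 * ind j x)" using intg_ind by simp
      fix x
      show "(fs j x)\<^sup>2 \<le> (w' j)\<^sup>2 * ind j x"
      proof (cases "ind j x = 0")
        case True thus ?thesis by (simp add: fs_def)
        next
        case False
        hence "ind j x = 1" using ind01 by blast
        thus ?thesis using fs_bnd[OF j, of x] by (simp add: abs_le_square_iff[symmetric])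
      qed
    qed
    also have "\<dots> = p j * (w' j)\<^sup>2" using int_ind[OF j] by simp
    finally show ?thesis .
  qed
  have fns_meas[measurable]: "(\<lambda>x. - fs j x) \<in> borel_measurable M" for j by measurable
  have np16: "j < B \<Longrightarrow> 16 * L \<le> real n * p j" for j
  proof -
    assume j: "j < B"
    have "real n * (1 / (2 * real B)) \<le> real n * p j" using p_lo[OF j] by (intro mult_left_mono) auto
    moreover have "16 * L \<le> real n * (1 / (2 * real B))" using nL B1 by (simp add: field_simps)
    ultimately show ?thesis by linarith
  qed
  define t where "t j = 2 * w' j * sqrt (real n * p j * L)" for j
  define Ec where "Ec j = {T \<in> space P. real n * p j / 2 \<le> (\<Sum>i<n. fc j (T i))}" for j
  define Es where "Es j = {T \<in> space P. t j \<le> (\<Sum>i<n. fs j (T i))}" for j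
  define En where "En j = {T \<in> space P. t j \<le> (\<Sum>i<n. - fs j (T i))}" for j
  have Ec_sets: "Ec j \<in> sets P" for j unfolding Ec_def P_def by measurable
  have Es_sets: "Es j \<in> sets P" for j unfolding Es_def P_def by measurable
  have En_sets: "En j \<in> sets P" for j unfolding En_def P_def by measurable
  have Ec_prob: "j < B \<Longrightarrow> measure P (Ec j) \<le> exp (- L)" for j
  proof -
    assume j: "j < B"
    have "measure P (Ec j) \<le> exp (- (1/4) * (real n * p j / 2) + real n * (1/4)\<^sup>2 * p j)"
      unfolding Ec_def P_def
      by (rule chernoff_prod[OF Mp fc_meas fc_bnd _ _ fc_mean[OF j] fc_var[OF j]]) auto
    also have "\<dots> \<le> exp (- L)" using np16[OF j] by (simp add: power2_eq_square)
    finally show ?thesis .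
  qed
  have lam: "j < B \<Longrightarrow> - (sqrt (L / (real n * p j)) / w' j) * t j
      + real n * (sqrt (L / (real n * p j)) / w' j)\<^sup>2 * (p j * (w' j)\<^sup>2) = - L" for j
  proof -
    assume j: "j < B"
    have np: "0 < real n * p j" using npos p_pos[OF j] by simp
    have s1: "sqrt (L / (real n * p j)) * sqrt (real n * p j * L) = L"
    proof -
      have ee: "\<And>q::real. q \<noteq> 0 \<Longrightarrow> L / q * (q * L) = L * L" by (simp add: field_simps)
      have e: "L / (real n * p j) * (real n * p j * L) = L * L" by (rule ee) (use np in linarith)
      have "sqrt (L / (real n * p j)) * sqrt (real n * p j * L) = sqrt (L / (real n * p j) * (real n * p j * L))"
        by (rule real_sqrt_mult[symmetric])
      also have "\<dots> = L" unfolding e using Lpos by simp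
      finally show ?thesis .
    qed
    have s2: "(sqrt (L / (real n * p j)))\<^sup>2 = L / (real n * p j)" using np Lpos by simp
    have a: "\<And>s r w::real. w \<noteq> 0 \<Longrightarrow> - (s / w) * (2 * w * r) = - 2 * (s * r)"
      by (simp add: field_simps)
    have b: "\<And>s w q N::real. w \<noteq> 0 \<Longrightarrow> N * (s / w)\<^sup>2 * (q * w\<^sup>2) = N * s\<^sup>2 * q"
      by (simp add: field_simps power2_eq_square)
    have c: "\<And>N q::real. N * q \<noteq> 0 \<Longrightarrow> N * (L / (N * q)) * q = L"
      by (simp add: field_simps)
    have w0: "w' j \<noteq> 0" using w'_pos[of j] by simp
    have np0: "real n * p j \<noteq> 0" using np by linarith
    show ?thesis unfolding t_def a[OF w0] b[OF w0] s1 s2 c[OF np0] by simp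
  qed
  have lamw: "j < B \<Longrightarrow> sqrt (L / (real n * p j)) / w' j * w' j \<le> 1" for j
  proof -
    assume j: "j < B"
    have np: "0 < real n * p j" using npos p_pos[OF j] by simp
    have "L / (real n * p j) \<le> 1" using np16[OF j] Lpos np by (simp add: divide_le_eq)
    thus ?thesis using w'_pos[of j] by simp
  qed
  have l0: "j < B \<Longrightarrow> 0 \<le> sqrt (L / (real n * p j)) / w' j" for j
    by (rule divide_nonneg_pos) (use Lpos npos p_pos[of j] in \<open>simp_all add: w'_pos less_imp_le\<close>)
  have fns_bnd: "j < B \<Longrightarrow> \<bar>- fs j x\<bar> \<le> w' j" for j x using fs_bnd[of j x] by simp
  have fns_mean: "j < B \<Longrightarrow> (\<integral>x. - fs j x \<partial>M) = 0" for j using fs_mean[of j] by simp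
  have fns_var: "j < B \<Longrightarrow> (\<integral>x. (- fs j x)\<^sup>2 \<partial>M) \<le> p j * (w' j)\<^sup>2" for j using fs_var[of j] by simp
  have Es_prob: "j < B \<Longrightarrow> measure P (Es j) \<le> exp (- L)" for j
  proof -
    assume j: "j < B"
    have "measure P (Es j) \<le> exp (- (sqrt (L / (real n * p j)) / w' j) * t j
      + real n * (sqrt (L / (real n * p j)) / w' j)\<^sup>2 * (p j * (w' j)\<^sup>2))"
      unfolding Es_def P_def
      by (rule chernoff_prod[OF Mp fs_meas fs_bnd[OF j] l0[OF j] lamw[OF j] fs_mean[OF j] fs_var[OF j]])
    thus ?thesis by (simp only: lam[OF j])
  qed
  have En_prob: "j < B \<Longrightarrow> measure P (En j) \<le> exp (- L)" for j
  proof -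
    assume j: "j < B"
    have "measure P (En j) \<le> exp (- (sqrt (L / (real n * p j)) / w' j) * t j
      + real n * (sqrt (L / (real n * p j)) / w' j)\<^sup>2 * (p j * (w' j)\<^sup>2))"
      unfolding En_def P_def
      by (rule chernoff_prod[OF Mp fns_meas fns_bnd[OF j] l0[OF j] lamw[OF j] fns_mean[OF j] fns_var[OF j]])
    thus ?thesis by (simp only: lam[OF j])
  qed
  have ind_eq: "j < B \<Longrightarrow> indicator (I j) (g (fst x)) = ind j x" for j x
    by (simp add: ind_def J_def)
  have intF: "(\<integral>x. F (bin_index B I (g (fst x))) \<partial>M) = (\<Sum>j<B. p j * F j)" for F :: "nat \<Rightarrow> real"
  proof -
    have eq1: "F (bin_index B I (g (fst x))) = (if g (fst x) \<in> {0..1} then (\<Sum>j<B. ind j x * F j) else F (The (\<lambda>_. False)))" for x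
    proof -
      have "(\<Sum>j<B. indicator (I j) (g (fst x)) * F j) = (\<Sum>j<B. ind j x * F j)"
        by (rule sum.cong) (simp_all add: ind_eq)
      thus ?thesis by (subst bin_fun[OF bs]) simp
    qed
    have m1: "(\<lambda>x. F (bin_index B I (g (fst x)))) \<in> borel_measurable M"
      unfolding eq1 by measurable
    have m2: "(\<lambda>x. \<Sum>j<B. ind j x * F j) \<in> borel_measurable M" by measurable
    have "AE x in M. F (bin_index B I (g (fst x))) = (\<Sum>j<B. ind j x * F j)"
      using ae by eventually_elim (use g01 eq1 in auto)
    hence "(\<integral>x. F (bin_index B I (g (fst x))) \<partial>M) = (\<integral>x. (\<Sum>j<B. ind j x * F j) \<partial>M)"
      by (rule integral_cong_AE[OF m1 m2])
    also have "\<dots> = (\<Sum>j<B. (\<integral>x. ind j x * F j \<partial>M))"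
      by (rule Bochner_Integration.integral_sum) (use intg_ind in simp)
    also have "\<dots> = (\<Sum>j<B. p j * F j)"
      by (rule sum.cong) (simp_all add: int_ind)
    finally show ?thesis .
  qed
  define e where "e T j = (let K = {i \<in> {..<n}. g (fst (T i)) \<in> I j}
      in if K = {} then 0 else (\<Sum>i\<in>K. g (fst (T i))) / real (card K))" for T :: "nat \<Rightarrow> real \<times> bool" and j
  have emp_eq: "emp_binned g B I n T z = e T (bin_index B I (g z))" for T z
    by (simp add: emp_binned_def e_def)
  have pop_eq: "pop_binned M g B I z = m (bin_index B I (g z))" for z
    by (simp add: pop_binned_def m_def p_def A_def Let_def)
  have L2_eq: "L2_dist M (emp_binned g B I n T) (pop_binned M g B I) = sqrt (\<Sum>j<B. p j * (e T j - m j)\<^sup>2)" for T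
    unfolding L2_dist_def emp_eq pop_eq using intF[of "\<lambda>j. (e T j - m j)\<^sup>2"] by simp
  have L1_eq: "L1_dist M (emp_binned g B I n T) (pop_binned M g B I) = (\<Sum>j<B. p j * \<bar>e T j - m j\<bar>)" for T
    unfolding L1_dist_def emp_eq pop_eq using intF[of "\<lambda>j. \<bar>e T j - m j\<bar>"] by simp
  have e_alt: "e T j = (if (\<Sum>i<n. ind j (T i)) = 0 then 0
       else (\<Sum>i<n. ind j (T i) * g (fst (T i))) / (\<Sum>i<n. ind j (T i)))" if j: "j < B" for T j
  proof -
    define K where "K = {i \<in> {..<n}. g (fst (T i)) \<in> I j}"
    have fK: "finite K" by (simp add: K_def)
    have c: "(\<Sum>i<n. ind j (T i)) = real (card K)"
    proof -
      have "(\<Sum>i<n. ind j (T i)) = (\<Sum>i<n. if g (fst (T i)) \<in> I j then 1 else 0)"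
        by (rule sum.cong) (simp_all add: ind_I[OF j])
      also have "\<dots> = (\<Sum>i\<in>K. 1)" unfolding K_def by (rule sum.inter_filter[symmetric]) simp
      finally show ?thesis by simp
    qed
    have s: "(\<Sum>i<n. ind j (T i) * g (fst (T i))) = (\<Sum>i\<in>K. g (fst (T i)))"
    proof -
      have "(\<Sum>i<n. ind j (T i) * g (fst (T i))) = (\<Sum>i<n. if g (fst (T i)) \<in> I j then g (fst (T i)) else 0)"
        by (rule sum.cong) (simp_all add: ind_I[OF j])
      also have "\<dots> = (\<Sum>i\<in>K. g (fst (T i)))" unfolding K_def by (rule sum.inter_filter[symmetric]) simp
      finally show ?thesis .
    qed
    have "e T j = (if K = {} then 0 else (\<Sum>i\<in>K. g (fst (T i))) / real (card K))"
      by (simp add: e_def K_def Let_def)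
    thus ?thesis unfolding c s using fK by simp
  qed
  have e_meas: "j < B \<Longrightarrow> (\<lambda>T. e T j) \<in> borel_measurable P" for j
  proof -
    assume j: "j < B"
    have "(\<lambda>T. e T j) = (\<lambda>T. if (\<Sum>i<n. ind j (T i)) = 0 then 0
       else (\<Sum>i<n. ind j (T i) * g (fst (T i))) / (\<Sum>i<n. ind j (T i)))"
      using e_alt[OF j] by (intro ext) simp
    also have "\<dots> \<in> borel_measurable P" unfolding P_def by measurable
    finally show ?thesis .
  qed
  have perbin: "p j * (e T j - m j)\<^sup>2 \<le> 16 * (w' j)\<^sup>2 * L / real n \<and>
      p j * \<bar>e T j - m j\<bar> \<le> 4 * w' j * sqrt (2 * L / (real B * real n))"
    if j: "j < B" and T: "T \<in> space P" "T \<notin> Ec j" "T \<notin> Es j" "T \<notin> En j" for T j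
  proof -
    define N where "N = (\<Sum>i<n. ind j (T i))"
    define G where "G = (\<Sum>i<n. ind j (T i) * g (fst (T i)))"
    have pj: "0 < p j" "p j \<le> 2 / real B" using p_pos[OF j] p_hi[OF j] by auto
    have np: "0 < real n * p j" using npos pj by simp
    have "(\<Sum>i<n. fc j (T i)) = real n * p j - N"
      by (simp add: fc_def N_def sum_subtractf)
    hence N: "real n * p j / 2 < N" using T(1,2) by (simp add: Ec_def)
    have Npos: "0 < N" using N np by linarith
    have "(\<Sum>i<n. fs j (T i)) = G - m j * N"
      by (simp add: fs_def G_def N_def sum_subtractf sum_distrib_left algebra_simps)
    moreover have "(\<Sum>i<n. - fs j (T i)) = - (\<Sum>i<n. fs j (T i))" by (simp add: sum_negf)
    ultimately have S: "\<bar>G - m j * N\<bar> < t j" using T(1,3,4) by (auto simp: Es_def En_def)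
    have eT: "e T j = G / N" using e_alt[OF j, of T] Npos by (simp add: N_def G_def)
    have D: "e T j - m j = (G - m j * N) / N" using Npos by (simp add: eT field_simps)
    define d where "d = \<bar>e T j - m j\<bar>"
    have d0: "0 \<le> d" by (simp add: d_def)
    have "d = \<bar>G - m j * N\<bar> / N" using Npos by (simp add: d_def D abs_divide)
    also have "\<dots> \<le> t j / N" using S Npos by (simp add: divide_right_mono)
    also have "\<dots> \<le> t j / (real n * p j / 2)"
    proof (rule divide_left_mono)
      show "0 \<le> t j" using S by linarith
      show "real n * p j / 2 \<le> N" using N by simp
      show "0 < N * (real n * p j / 2)" using Npos np by simp
    qed
    finally have dle: "d \<le> 2 * t j / (real n * p j)" by (simp add: mult.commute)
    have t0: "0 \<le> t j" using S by linarith
    have tsq: "(t j)\<^sup>2 = 4 * (w' j)\<^sup>2 * (real n * p j * L)"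
      using np Lpos by (simp add: t_def power_mult_distrib)
    have "p j * d\<^sup>2 \<le> p j * (2 * t j / (real n * p j))\<^sup>2"
      using dle d0 pj by (intro mult_left_mono power_mono) auto
    also have "\<dots> = 4 * (t j)\<^sup>2 / (real n * real n * p j)"
      using pj npos by (simp add: power2_eq_square field_simps)
    also have "\<dots> = 16 * (w' j)\<^sup>2 * L / real n"
      unfolding tsq using pj npos by (simp add: field_simps power2_eq_square)
    finally have b2: "p j * d\<^sup>2 \<le> 16 * (w' j)\<^sup>2 * L / real n" .
    have "p j * d \<le> p j * (2 * t j / (real n * p j))" using dle pj by (intro mult_left_mono) auto
    also have "\<dots> = 2 * t j / real n" using pj by simp
    also have "\<dots> = 4 * w' j * (sqrt (real n * p j * L) / real n)" by (simp add: t_def)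
    also have "sqrt (real n * p j * L) / real n = sqrt (p j * L / real n)"
    proof -
      have a: "sqrt (real n * p j * L) = sqrt (real n) * sqrt (p j * L)" by (simp add: real_sqrt_mult mult.assoc)
      have c: "sqrt (real n) * sqrt (real n) = real n" using npos by simp
      have sn: "sqrt (real n) \<noteq> 0" using npos by simp
      have gg: "\<And>r s::real. r \<noteq> 0 \<Longrightarrow> r * s / (r * r) = s / r" by simp
      have "sqrt (real n * p j * L) / real n = (sqrt (real n) * sqrt (p j * L)) / (sqrt (real n) * sqrt (real n))"
        by (simp only: a c)
      also have "\<dots> = sqrt (p j * L) / sqrt (real n)" by (rule gg[OF sn])
      also have "\<dots> = sqrt (p j * L / real n)" by (simp add: real_sqrt_divide)
      finally show ?thesis .
    qed
    also have "sqrt (p j * L / real n) \<le> sqrt (2 * L / (real B * real n))"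
    proof (rule real_sqrt_le_mono)
      have "p j * L / real n \<le> (2 / real B) * L / real n"
        using pj Lpos npos by (intro divide_right_mono mult_right_mono) auto
      thus "p j * L / real n \<le> 2 * L / (real B * real n)" by simp
    qed
    hence "4 * w' j * sqrt (p j * L / real n) \<le> 4 * w' j * sqrt (2 * L / (real B * real n))"
      using w'_pos[of j] by simp
    finally have b1: "p j * d \<le> 4 * w' j * sqrt (2 * L / (real B * real n))" .
    show ?thesis using b1 b2 by (simp add: d_def)
  qed
  define R2 where "R2 = 14 / sqrt (real n) * sqrt lnB"
  define R1 where "R1 = 20 / sqrt (real n * real B) * sqrt lnB"
  define tgt where "tgt = {T \<in> space P. sqrt (\<Sum>j<B. p j * (e T j - m j)\<^sup>2) \<le> R2
      \<and> (\<Sum>j<B. p j * \<bar>e T j - m j\<bar>) \<le> R1}"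
  have m1[measurable]: "(\<lambda>T. \<Sum>j<B. p j * (e T j - m j)\<^sup>2) \<in> borel_measurable P"
  proof (rule borel_measurable_sum)
    fix j assume "j \<in> {..<B}"
    hence [measurable]: "(\<lambda>T. e T j) \<in> borel_measurable P" using e_meas by simp
    show "(\<lambda>T. p j * (e T j - m j)\<^sup>2) \<in> borel_measurable P" by measurable
  qed
  have m2[measurable]: "(\<lambda>T. \<Sum>j<B. p j * \<bar>e T j - m j\<bar>) \<in> borel_measurable P"
  proof (rule borel_measurable_sum)
    fix j assume "j \<in> {..<B}"
    hence [measurable]: "(\<lambda>T. e T j) \<in> borel_measurable P" using e_meas by simp
    show "(\<lambda>T. p j * \<bar>e T j - m j\<bar>) \<in> borel_measurable P" by measurable
  qed
  have tgt_sets: "tgt \<in> sets P" unfolding tgt_def by measurable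
  have nn0: "real n \<noteq> 0" using npos by simp
  have lnB0: "0 \<le> lnB" using lnB2 ln2pos by linarith
  have w2: "(\<Sum>j<B. (w' j)\<^sup>2) \<le> 4"
  proof -
    have "(\<Sum>j<B. (w' j)\<^sup>2) \<le> (\<Sum>j<B. 2 * w' j)"
    proof (rule sum_mono)
      fix j assume "j \<in> {..<B}"
      hence "w' j \<le> 2" using w'_le2 by simp
      thus "(w' j)\<^sup>2 \<le> 2 * w' j" using w'_pos[of j] by (simp add: power2_eq_square mult_right_mono)
    qed
    also have "\<dots> = 2 * (\<Sum>j<B. w' j)" by (simp add: sum_distrib_left)
    also have "\<dots> \<le> 4" using w'_sum by simp
    finally show ?thesis .
  qed
  have inG: "T \<in> tgt" if T: "T \<in> space P" and nb: "\<forall>j<B. T \<notin> Ec j \<and> T \<notin> Es j \<and> T \<notin> En j" for T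
  proof -
    have pb: "j < B \<Longrightarrow> p j * (e T j - m j)\<^sup>2 \<le> 16 * (w' j)\<^sup>2 * L / real n \<and>
      p j * \<bar>e T j - m j\<bar> \<le> 4 * w' j * sqrt (2 * L / (real B * real n))" for j
      using perbin[OF _ T] nb by blast
    have "(\<Sum>j<B. p j * (e T j - m j)\<^sup>2) \<le> (\<Sum>j<B. 16 * L / real n * (w' j)\<^sup>2)"
      by (rule sum_mono) (use pb in \<open>simp add: mult_ac\<close>)
    also have "\<dots> = 16 * L / real n * (\<Sum>j<B. (w' j)\<^sup>2)" by (simp add: sum_distrib_left)
    also have "\<dots> \<le> 16 * L / real n * 4"
      using w2 Lpos npos by (intro mult_left_mono) auto
    also have "\<dots> \<le> 196 * lnB / real n"
      using L_le Lpos npos lnB0 by (simp add: divide_right_mono)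
    finally have s2: "(\<Sum>j<B. p j * (e T j - m j)\<^sup>2) \<le> 196 * lnB / real n" .
    have "sqrt (196 * lnB / real n) = R2"
    proof -
      have "sqrt (196::real) = 14" using real_sqrt_abs[of "14::real"] by simp
      thus ?thesis unfolding R2_def by (simp add: real_sqrt_mult real_sqrt_divide)
    qed
    hence r2: "sqrt (\<Sum>j<B. p j * (e T j - m j)\<^sup>2) \<le> R2"
      using s2 real_sqrt_le_mono by metis
    define X where "X = sqrt (2 * L / (real B * real n))"
    have "(\<Sum>j<B. p j * \<bar>e T j - m j\<bar>) \<le> (\<Sum>j<B. 4 * X * w' j)"
      by (rule sum_mono) (use pb in \<open>simp add: X_def mult_ac\<close>)
    also have "\<dots> = 4 * X * (\<Sum>j<B. w' j)" by (simp add: sum_distrib_left)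
    also have "\<dots> \<le> 4 * X * 2" using w'_sum Lpos npos by (intro mult_left_mono) (auto simp: X_def)
    also have "4 * X * 2 = sqrt (128 * L / (real B * real n))"
    proof -
      have s64: "sqrt (64::real) = 8" using real_sqrt_abs[of "8::real"] by simp
      have "128 * L / (real B * real n) = 64 * (2 * L / (real B * real n))" by simp
      hence "sqrt (128 * L / (real B * real n)) = sqrt 64 * X"
        unfolding X_def by (simp only: real_sqrt_mult)
      thus ?thesis using s64 by simp
    qed
    also have "\<dots> \<le> sqrt (400 * lnB / (real n * real B))"
    proof (rule real_sqrt_le_mono)
      have "128 * L \<le> 400 * lnB" using L_le Lpos lnB0 by simp
      thus "128 * L / (real B * real n) \<le> 400 * lnB / (real n * real B)"
        using npos B1 by (simp add: divide_right_mono mult.commute)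
    qed
    also have "\<dots> = R1"
    proof -
      have "sqrt (400::real) = 20" using real_sqrt_abs[of "20::real"] by simp
      thus ?thesis unfolding R1_def by (simp add: real_sqrt_mult real_sqrt_divide)
    qed
    finally have r1: "(\<Sum>j<B. p j * \<bar>e T j - m j\<bar>) \<le> R1" .
    show ?thesis using T r1 r2 by (simp add: tgt_def)
  qed
  have sub: "space P - tgt \<subseteq> (\<Union>j\<in>{..<B}. Ec j \<union> Es j \<union> En j)"
    using inG by blast
  have bad_sets: "(\<lambda>j. Ec j \<union> Es j \<union> En j) ` {..<B} \<subseteq> sets P"
    using Ec_sets Es_sets En_sets by auto
  have "measure P (space P - tgt) \<le> measure P (\<Union>j\<in>{..<B}. Ec j \<union> Es j \<union> En j)"
    by (rule P.finite_measure_mono[OF sub]) (use bad_sets in auto)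
  also have "\<dots> \<le> (\<Sum>j<B. measure P (Ec j \<union> Es j \<union> En j))"
    by (rule P.finite_measure_subadditive_finite[OF _ bad_sets]) simp
  also have "\<dots> \<le> (\<Sum>j<B. 3 * exp (- L))"
  proof (rule sum_mono)
    fix j assume j: "j \<in> {..<B}"
    have "measure P (Ec j \<union> Es j \<union> En j) \<le> measure P (Ec j \<union> Es j) + measure P (En j)"
      by (rule measure_Un_le) (auto simp: Ec_sets Es_sets En_sets)
    also have "\<dots> \<le> measure P (Ec j) + measure P (Es j) + measure P (En j)"
      using measure_Un_le[OF Ec_sets Es_sets, of j j] by simp
    also have "\<dots> \<le> 3 * exp (- L)" using Ec_prob[of j] Es_prob[of j] En_prob[of j] j by simp
    finally show "measure P (Ec j \<union> Es j \<union> En j) \<le> 3 * exp (- L)" .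
  qed
  also have "\<dots> = \<delta>" using B1 expL by simp
  finally have "measure P (space P - tgt) \<le> \<delta>" .
  hence fin: "1 - \<delta> \<le> measure P tgt" using P.prob_compl[OF tgt_sets] by simp
  have "{T \<in> space (PiM {..<n} (\<lambda>_. M)).
            L2_dist M (emp_binned g B I n T) (pop_binned M g B I)
              \<le> 14 / sqrt (real n) * sqrt (ln (real B / \<delta>)) \<and>
            L1_dist M (emp_binned g B I n T) (pop_binned M g B I)
              \<le> 20 / sqrt (real n * real B) * sqrt (ln (real B / \<delta>))} = tgt"
    unfolding tgt_def L2_eq L1_eq R1_def R2_def lnB_def P_def ..
  thus ?thesis using fin by (simp add: P_def)
qed


theorem mainTheorem4:
  "\<exists>cB c1 c2 :: real. cB > 0 \<and> c1 > 0 \<and> c2 > 0 \<and>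
    (\<forall>(M :: (real \<times> bool) measure) (g :: real \<Rightarrow> real) (B :: nat) (I :: nat \<Rightarrow> real set) (n :: nat) (\<delta> :: real).
       prob_space M \<longrightarrow>
       sets M = sets (borel \<Otimes>\<^sub>M count_space UNIV) \<longrightarrow>
       (AE x in M. fst x \<in> {0..1}) \<longrightarrow>
       g \<in> borel_measurable borel \<longrightarrow>
       (\<forall>z\<in>{0..1}. g z \<in> {0..1}) \<longrightarrow>
       binning_scheme B I \<longrightarrow>
       well_balanced2 M g B I \<longrightarrow>
       0 < \<delta> \<longrightarrow> \<delta> < 1/2 \<longrightarrow>
       real n \<ge> cB * real B * ln (real B / \<delta>) \<longrightarrow>
       measure (PiM {..<n} (\<lambda>_. M))
         {T \<in> space (PiM {..<n} (\<lambda>_. M)).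
            L2_dist M (emp_binned g B I n T) (pop_binned M g B I)
              \<le> c2 / sqrt (real n) * sqrt (ln (real B / \<delta>)) \<and>
            L1_dist M (emp_binned g B I n T) (pop_binned M g B I)
              \<le> c1 / sqrt (real n * real B) * sqrt (ln (real B / \<delta>))}
       \<ge> 1 - \<delta>)"
  apply (rule exI[of _ 96], rule exI[of _ 20], rule exI[of _ 14])
  apply (intro conjI allI impI)
     apply simp
    apply simp
   apply simp
  apply (rule main_fixed; assumption)
  done

end
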